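(* Let $M$ be a known finite-horizon reward-free MDP, $\Pi\subseteq\Pi_{\mathrm{RNS}}$, $\varepsilon\in[0,1]$ and $h\in[H]$. Consider the procedure: set $T=\varepsilon^{-1}$; for $t=1,\dots,T$ compute $\pi^{(t)}\in\Pi$ with $$\mathbb{E}^{M,\pi^{(t)}}\Big[\frac{P^M_{h-1}(x_h\mid x_{h-1},a_{h-1})}{\sum_{i<t}d^{M,\pi^{(i)}}_h(x_h)+P^M_{h-1}(x_h\mid x_{h-1},a_{h-1})}\Big]\ge\sup_{\pi\in\Pi}\mathbb{E}^{M,\pi}\Big[\frac{P^M_{h-1}(x_h\mid x_{h-1},a_{h-1})}{\sum_{i<t}d^{M,\pi^{(i)}}_h(x_h)+P^M_{h-1}(x_h\mid x_{h-1},a_{h-1})}\Big]-\varepsilon_{\mathrm{opt}},$$ and return $p=\mathrm{Unif}(\pi^{(1)},\dots,\pi^{(T)})$. Whenever $\varepsilon_{\mathrm{opt}}\le C^M_{\mathrm{push};h}\cdot\varepsilon\log(2\varepsilon^{-1})$, the output $p\in\Delta(\Pi)$ satisfies $|\mathrm{supp}(p)|\le\varepsilon^{-1}$ and $$\Psi^M_{\mathrm{push};h,\varepsilon}(p)\le 5C^M_{\mathrm{push};h}\log(2\varepsilon^{-1}).$$ Consequently, if $p'$ is the distribution induced by sampling $\pi\sim p$ and executing $\pi\circ_h\pi_{\mathrm{unif}}$, then $\Psi^M_{h,\varepsilon}(p')\le 5|\mathcal{A}|C^M_{\mathrm{push};h}\log(2\varepsilon^{-1})$.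
   Context: Episodic reward-free MDP $M$ (countable states $\mathcal{X}$, actions $\mathcal{A}$, horizon $H$, transitions $P^M_h$). $\Pi_{\mathrm{RNS}}$: randomized non-stationary policies; $\pi_{\mathrm{unif}}$: uniform policy; $\pi\circ_h\pi'$ follows $\pi$ at layers $<h$ and $\pi'$ at layers $\ge h$. $d^{M,\pi}_h(x)$, $d^{M,\pi}_h(x,a)$: layer-$h$ occupancies; $d^{M,p}_h=\mathbb{E}_{\pi\sim p}d^{M,\pi}_h$. Definitions: $\Psi^M_{h,\varepsilon}(p)=\sup_{\pi\in\Pi}\mathbb{E}^{M,\pi}\big[\frac{d^{M,\pi}_h(x_h,a_h)}{d^{M,p}_h(x_h,a_h)+\varepsilon d^{M,\pi}_h(x_h,a_h)}\big]$; $\Psi^M_{\mathrm{push};h,\varepsilon}(p)=\sup_{\pi\in\Pi}\mathbb{E}^{M,\pi}\big[\frac{P^M_{h-1}(x_h\mid x_{h-1},a_{h-1})}{d^{M,p}_h(x_h)+\varepsilon P^M_{h-1}(x_h\mid x_{h-1},a_{h-1})}\big]$; $C^M_{\mathrm{push};h}=\inf_{\mu\in\Delta(\mathcal{X})}\sup_{(x,a,x')}\frac{P^M_{h-1}(x'\mid x,a)}{\mu(x')}$. *)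

theory Defs
  imports "HOL-Probability.Probability"
begin

text \<open>Layers are 1..H. init is the layer-1 state distribution, trans h x a is the
  distribution of x_{h+1} given (x_h, a_h) = (x, a).\<close>

record ('x, 'a) mdp =
  horizon :: nat
  init :: "'x pmf"
  trans :: "nat \<Rightarrow> 'x \<Rightarrow> 'a \<Rightarrow> 'x pmf"

type_synonym ('x, 'a) policy = "nat \<Rightarrow> 'x \<Rightarrow> 'a pmf"

text \<open>P_{h-1}(x' | x, a), with the standard convention P_0(. | x, a) = d_1 (initial distribution).\<close>
definition Pprev :: "('x, 'a) mdp \<Rightarrow> nat \<Rightarrow> 'x \<Rightarrow> 'a \<Rightarrow> 'x pmf" where
  "Pprev M h x a = (if h \<le> 1 then init M else trans M (h - 1) x a)"

text \<open>Law of the state x_h under policy \<pi> (layer 0 is a dummy copy of init).\<close>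
fun state_dist :: "('x, 'a) mdp \<Rightarrow> ('x, 'a) policy \<Rightarrow> nat \<Rightarrow> 'x pmf" where
  "state_dist M \<pi> 0 = init M"
| "state_dist M \<pi> (Suc 0) = init M"
| "state_dist M \<pi> (Suc (Suc h)) =
     bind_pmf (state_dist M \<pi> (Suc h)) (\<lambda>x. bind_pmf (\<pi> (Suc h) x) (\<lambda>a. trans M (Suc h) x a))"

definition occ :: "('x, 'a) mdp \<Rightarrow> ('x, 'a) policy \<Rightarrow> nat \<Rightarrow> 'x \<Rightarrow> real" where
  "occ M \<pi> h x = pmf (state_dist M \<pi> h) x"

definition sa_dist :: "('x, 'a) mdp \<Rightarrow> ('x, 'a) policy \<Rightarrow> nat \<Rightarrow> ('x \<times> 'a) pmf" where
  "sa_dist M \<pi> h = bind_pmf (state_dist M \<pi> h) (\<lambda>x. map_pmf (\<lambda>a. (x, a)) (\<pi> h x))"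

definition occ_sa :: "('x, 'a) mdp \<Rightarrow> ('x, 'a) policy \<Rightarrow> nat \<Rightarrow> 'x \<times> 'a \<Rightarrow> real" where
  "occ_sa M \<pi> h xa = pmf (sa_dist M \<pi> h) xa"

definition occ_mix :: "('x, 'a) mdp \<Rightarrow> ('x, 'a) policy pmf \<Rightarrow> nat \<Rightarrow> 'x \<Rightarrow> real" where
  "occ_mix M p h x = measure_pmf.expectation p (\<lambda>\<pi>. occ M \<pi> h x)"

definition occ_sa_mix :: "('x, 'a) mdp \<Rightarrow> ('x, 'a) policy pmf \<Rightarrow> nat \<Rightarrow> 'x \<times> 'a \<Rightarrow> real" where
  "occ_sa_mix M p h xa = measure_pmf.expectation p (\<lambda>\<pi>. occ_sa M \<pi> h xa)"

text \<open>For h = 1 the pair (x_0,a_0) is a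
  dummy and the x_h-marginal is init, so expectations of functions of
  (P_0(x_1|x_0,a_0), x_1) do not depend on the dummy.\<close>
definition trip_dist :: "('x, 'a) mdp \<Rightarrow> ('x, 'a) policy \<Rightarrow> nat \<Rightarrow> ('x \<times> 'a \<times> 'x) pmf" where
  "trip_dist M \<pi> h = bind_pmf (state_dist M \<pi> (h - 1)) (\<lambda>x. bind_pmf (\<pi> (h - 1) x)
       (\<lambda>a. map_pmf (\<lambda>x'. (x, a, x')) (Pprev M h x a)))"

definition push_obj :: "('x, 'a) mdp \<Rightarrow> nat \<Rightarrow> ('x \<Rightarrow> real) \<Rightarrow> real \<Rightarrow> ('x, 'a) policy \<Rightarrow> real" where
  "push_obj M h D c \<pi> = measure_pmf.expectation (trip_dist M \<pi> h)
     (\<lambda>(x, a, x'). pmf (Pprev M h x a) x' / (D x' + c * pmf (Pprev M h x a) x'))"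

definition Psi_push :: "('x, 'a) mdp \<Rightarrow> ('x, 'a) policy set \<Rightarrow> nat \<Rightarrow> real \<Rightarrow> ('x, 'a) policy pmf \<Rightarrow> real" where
  "Psi_push M PI h \<epsilon> p = (SUP \<pi>\<in>PI. push_obj M h (occ_mix M p h) \<epsilon> \<pi>)"

definition Psi :: "('x, 'a) mdp \<Rightarrow> ('x, 'a) policy set \<Rightarrow> nat \<Rightarrow> real \<Rightarrow> ('x, 'a) policy pmf \<Rightarrow> real" where
  "Psi M PI h \<epsilon> p = (SUP \<pi>\<in>PI. measure_pmf.expectation (sa_dist M \<pi> h)
       (\<lambda>xa. occ_sa M \<pi> h xa / (occ_sa_mix M p h xa + \<epsilon> * occ_sa M \<pi> h xa)))"

definition C_push :: "('x, 'a) mdp \<Rightarrow> nat \<Rightarrow> ennreal" where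
  "C_push M h = (INF \<mu>::'x pmf. SUP xax\<in>(UNIV :: ('x \<times> 'a \<times> 'x) set).
       (case xax of (x, a, x') \<Rightarrow> ennreal (pmf (Pprev M h x a) x') / ennreal (pmf \<mu> x')))"

definition unif_pol :: "('x, 'a::finite) policy" where
  "unif_pol = (\<lambda>l x. pmf_of_set UNIV)"

definition comp_pol :: "('x, 'a) policy \<Rightarrow> nat \<Rightarrow> ('x, 'a) policy \<Rightarrow> ('x, 'a) policy" where
  "comp_pol \<pi> h \<pi>' = (\<lambda>l. if l < h then \<pi> l else \<pi>' l)"

end

theory Submission
  imports Defs
begin

lemma state_dist_step:
  assumes "1 \<le> h"
  shows "state_dist M \<pi> h = bind_pmf (state_dist M \<pi> (h-1)) (\<lambda>x. bind_pmf (\<pi> (h-1) x) (\<lambda>a. Pprev M h x a))"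
proof (cases h)
  case 0 then show ?thesis using assms by simp
next
  case (Suc k) then show ?thesis by (cases k) (simp_all add: Pprev_def)
qed

lemma trip_marg:
  assumes "1 \<le> h"
  shows "map_pmf (\<lambda>(x,a,x'). x') (trip_dist M \<pi> h) = state_dist M \<pi> h"
  unfolding trip_dist_def by (simp add: map_bind_pmf map_pmf_comp state_dist_step[OF assms])

lemma nn_exp:
  fixes f :: "'b \<Rightarrow> real"
  assumes "\<And>x. 0 \<le> f x" "\<And>x. f x \<le> B"
  shows "ennreal (measure_pmf.expectation p f) = (\<integral>\<^sup>+ x. ennreal (f x) \<partial>p)"
proof -
  have "integrable (measure_pmf p) f"
    by (rule measure_pmf.integrable_const_bound[where B=B]) (use assms in auto)
  then show ?thesis using assms by (simp add: nn_integral_eq_integral)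
qed

lemma tangent:
  fixes D e y d :: real
  assumes "0 \<le> D" "0 < e" "0 \<le> y" "0 \<le> d"
  shows "d * (d / (D + e*d)) + (d * (2*D + e*d) / (D + e*d)^2) * (y - d) \<le> y * (y / (D + e*y))"
proof (cases "D = 0")
  case True
  then show ?thesis using assms
    by (cases "d = 0"; cases "y = 0") (simp_all add: power2_eq_square field_simps)
next
  case False
  then have D: "0 < D" using assms by simp
  have p1: "0 < D + e*d" "0 < D + e*y" using D assms by (simp_all add: add_pos_nonneg)
  have "y * (y / (D + e*y)) - (d * (d / (D + e*d)) + (d * (2*D + e*d) / (D + e*d)^2) * (y - d))
      = D^2 * (y-d)^2 / ((D + e*d)^2 * (D + e*y))"
  proof -
    have n1: "D + e*d \<noteq> 0" "D + e*y \<noteq> 0" using p1 by auto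
    show ?thesis using n1 by (simp add: divide_simps power2_eq_square) (simp add: algebra_simps)
  qed
  also have "\<dots> \<ge> 0" using p1 by simp
  finally show ?thesis by simp
qed

lemma g_bound:
  fixes D e t :: real
  assumes "0 \<le> D" "0 < e" "0 \<le> t" "t \<le> 1"
  shows "0 \<le> t * (t / (D + e*t))" "t * (t / (D + e*t)) \<le> 1 / e"
proof -
  show "0 \<le> t * (t / (D + e*t))" using assms by simp
  have "t / (D + e*t) \<le> 1 / e"
  proof (cases "t = 0")
    case False
    then have "0 < t" using assms by simp
    then have "t / (D + e*t) \<le> t / (e*t)" using assms
      by (intro divide_left_mono) (auto intro!: mult_pos_pos add_nonneg_pos)
    also have "\<dots> = 1 / e" using \<open>0 < t\<close> by simp
    finally show ?thesis .
  qed (use assms in simp)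
  then have "t * (t / (D + e*t)) \<le> 1 * (1 / e)"
    using assms by (intro mult_mono) auto
  then show "t * (t / (D + e*t)) \<le> 1 / e" by simp
qed

lemma jensen_push:
  fixes Q :: "'b pmf" and K :: "'b \<Rightarrow> 'x::countable pmf" and D :: "'x \<Rightarrow> real"
  assumes D: "\<And>x. 0 \<le> D x" and e: "0 < e"
  shows "(\<integral>\<^sup>+x'. ennreal (pmf (bind_pmf Q K) x' * (pmf (bind_pmf Q K) x' / (D x' + e * pmf (bind_pmf Q K) x'))) \<partial>count_space UNIV)
    \<le> (\<integral>\<^sup>+y. \<integral>\<^sup>+x'. ennreal (pmf (K y) x' * (pmf (K y) x' / (D x' + e * pmf (K y) x'))) \<partial>count_space UNIV \<partial>Q)"
proof -
  have swap: "(\<integral>\<^sup>+y. \<integral>\<^sup>+x'. ennreal (pmf (K y) x' * (pmf (K y) x' / (D x' + e * pmf (K y) x'))) \<partial>count_space UNIV \<partial>Q)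
     = (\<integral>\<^sup>+x'. \<integral>\<^sup>+y. ennreal (pmf (K y) x' * (pmf (K y) x' / (D x' + e * pmf (K y) x'))) \<partial>Q \<partial>count_space UNIV)"
    by (rule nn_integral_count_space_nn_integral) auto
  show ?thesis unfolding swap
  proof (rule nn_integral_mono)
    fix x'
    define d where "d = pmf (bind_pmf Q K) x'"
    define g where "g = (\<lambda>t::real. t * (t / (D x' + e * t)))"
    define c where "c = d * (2 * D x' + e * d) / (D x' + e * d)^2"
    have d_eq: "d = (\<integral>y. pmf (K y) x' \<partial>Q)" unfolding d_def by (rule pmf_bind)
    have gb: "0 \<le> g (pmf (K y) x')" "g (pmf (K y) x') \<le> 1/e" for y
      unfolding g_def using g_bound[OF D e pmf_nonneg pmf_le_1] by auto
    have intP: "integrable Q (\<lambda>y. pmf (K y) x')"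
      by (rule measure_pmf.integrable_const_bound[where B=1]) (auto simp: pmf_le_1)
    have intg: "integrable Q (\<lambda>y. g (pmf (K y) x'))"
      by (rule measure_pmf.integrable_const_bound[where B="1/e"]) (use gb in auto)
    have "g d = (\<integral>y. g d + c * (pmf (K y) x' - d) \<partial>Q)"
      using intP by (simp add: d_eq[symmetric])
    also have "\<dots> \<le> (\<integral>y. g (pmf (K y) x') \<partial>Q)"
      apply (rule integral_mono)
      using intP apply simp
      using intg apply simp
      unfolding g_def c_def d_def by (rule tangent[OF D e pmf_nonneg pmf_nonneg])
    finally have "ennreal (g d) \<le> ennreal (\<integral>y. g (pmf (K y) x') \<partial>Q)" by (rule ennreal_leI)
    also have "\<dots> = (\<integral>\<^sup>+y. ennreal (g (pmf (K y) x')) \<partial>Q)"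
      by (rule nn_exp[where B="1/e"]) (use gb in auto)
    finally show "ennreal (pmf (bind_pmf Q K) x' * (pmf (bind_pmf Q K) x' / (D x' + e * pmf (bind_pmf Q K) x')))
      \<le> (\<integral>\<^sup>+y. ennreal (pmf (K y) x' * (pmf (K y) x' / (D x' + e * pmf (K y) x'))) \<partial>Q)"
      unfolding g_def d_def .
  qed
qed

lemma ln_tangent:
  fixes y :: real and T :: real
  assumes "0 \<le> y" "0 \<le> T"
  shows "ln (1 + y) \<le> ln (1 + T) + y / (1 + T)"
proof (cases "y \<le> T")
  case True
  then have "ln (1 + y) \<le> ln (1 + T)" using assms by simp
  moreover have "0 \<le> y / (1 + T)" using assms by simp
  ultimately show ?thesis by linarith
next
  case False
  have "ln ((1 + y) / (1 + T)) \<le> (1 + y) / (1 + T) - 1"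
    using assms by (intro ln_le_minus_one) auto
  also have "\<dots> = (y - T) / (1 + T)" using assms by (simp add: field_simps)
  also have "\<dots> \<le> y / (1 + T)" using assms by (simp add: divide_right_mono)
  finally show ?thesis using assms by (simp add: ln_div)
qed

lemma step_ln:
  fixes u d a :: real
  assumes "0 < a" "a \<le> u" "0 \<le> d" "d \<le> a"
  shows "d * (a / u) \<le> 2 * a * (ln (u + d) - ln u)"
proof -
  have u: "0 < u" using assms by simp
  have "ln (u / (u + d)) \<le> u / (u + d) - 1"
    using assms u by (intro ln_le_minus_one) auto
  also have "\<dots> = - (d / (u + d))" using u assms by (simp add: field_simps)
  finally have "d / (u + d) \<le> ln (u + d) - ln u" using u assms by (simp add: ln_div)
  moreover have "d / (2 * u) \<le> d / (u + d)"
    using u assms by (intro divide_left_mono) auto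
  ultimately have "d / (2 * u) \<le> ln (u + d) - ln u" by linarith
  then have "2 * a * (d / (2 * u)) \<le> 2 * a * (ln (u + d) - ln u)"
    using assms by (intro mult_left_mono) auto
  moreover have "2 * a * (d / (2 * u)) = d * (a / u)" using u by (simp add: field_simps)
  ultimately show ?thesis by linarith
qed

lemma potential_aux:
  fixes d :: "nat \<Rightarrow> real" and a :: real
  assumes a: "0 < a" and d: "\<And>t. 0 \<le> d t" "\<And>t. d t \<le> a"
  shows "(\<Sum>t\<in>{1..<n}. d t * (a / ((\<Sum>i\<in>{1..<t}. d i) + a)))
     \<le> 2 * a * (ln ((\<Sum>i\<in>{1..<n}. d i) + a) - ln a)"
proof (induction n)
  case 0 then show ?case by simp
next
  case (Suc n)
  show ?case
  proof (cases "1 \<le> n")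
    case False then show ?thesis by simp
  next
    case True
    define S where "S = (\<Sum>i\<in>{1..<n}. d i)"
    have S0: "0 \<le> S" unfolding S_def using d by (simp add: sum_nonneg)
    have "(\<Sum>t\<in>{1..<Suc n}. d t * (a / ((\<Sum>i\<in>{1..<t}. d i) + a)))
        = (\<Sum>t\<in>{1..<n}. d t * (a / ((\<Sum>i\<in>{1..<t}. d i) + a))) + d n * (a / (S + a))"
      using True by (simp add: S_def atLeastLessThanSuc)
    also have "\<dots> \<le> 2 * a * (ln (S + a) - ln a) + 2 * a * (ln ((S + a) + d n) - ln (S + a))"
      using Suc.IH step_ln[OF a _ d(1) d(2), of "S + a" n] S0 unfolding S_def by (intro add_mono) auto
    also have "\<dots> = 2 * a * (ln ((\<Sum>i\<in>{1..<Suc n}. d i) + a) - ln a)"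
      using True by (simp add: S_def atLeastLessThanSuc algebra_simps)
    finally show ?thesis .
  qed
qed

lemma potential:
  fixes d :: "nat \<Rightarrow> real" and a :: real and T :: nat
  assumes a: "0 \<le> a" and d: "\<And>t. 0 \<le> d t" "\<And>t. d t \<le> a"
  shows "(\<Sum>t\<in>{1..T}. d t * (a / ((\<Sum>i\<in>{1..<t}. d i) + a)))
     \<le> 2 * a * ln (1 + real T) + 2 * (\<Sum>i\<in>{1..T}. d i) / (1 + real T)"
proof (cases "a = 0")
  case True
  then have "\<And>t. d t = 0" using d by (meson antisym)
  then show ?thesis using True by simp
next
  case False
  then have a0: "0 < a" using a by simp
  define S where "S = (\<Sum>i\<in>{1..T}. d i)"
  have S0: "0 \<le> S" unfolding S_def using d by (simp add: sum_nonneg)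
  have eq: "{1..T} = {1..<Suc T}" by auto
  have "(\<Sum>t\<in>{1..T}. d t * (a / ((\<Sum>i\<in>{1..<t}. d i) + a))) \<le> 2 * a * (ln (S + a) - ln a)"
    using potential_aux[where a=a and d=d and n="Suc T", OF a0 d] unfolding eq S_def by simp
  also have "ln (S + a) - ln a = ln (1 + S / a)"
  proof -
    have "1 + S / a = (S + a) / a" using a0 by (simp add: field_simps)
    then show ?thesis using a0 S0 by (simp add: ln_div)
  qed
  also have "2 * a * ln (1 + S / a) \<le> 2 * a * (ln (1 + real T) + (S / a) / (1 + real T))"
    using a0 S0 by (intro mult_left_mono ln_tangent) auto
  also have "\<dots> = 2 * a * ln (1 + real T) + 2 * S / (1 + real T)"
  proof -
    have "2 * a * ((S / a) / (1 + real T)) = 2 * S / (1 + real T)" using a0 by simp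
    then show ?thesis by (simp add: distrib_left)
  qed
  finally show ?thesis unfolding S_def .
qed

definition Qp :: "('x, 'a) mdp \<Rightarrow> ('x, 'a) policy \<Rightarrow> nat \<Rightarrow> ('x \<times> 'a) pmf" where
  "Qp M \<pi> h = bind_pmf (state_dist M \<pi> (h-1)) (\<lambda>x. map_pmf (Pair x) (\<pi> (h-1) x))"

definition Kp :: "('x, 'a) mdp \<Rightarrow> nat \<Rightarrow> 'x \<times> 'a \<Rightarrow> 'x pmf" where
  "Kp M h y = Pprev M h (fst y) (snd y)"

lemma trip_Q: "trip_dist M \<pi> h = bind_pmf (Qp M \<pi> h) (\<lambda>y. map_pmf (\<lambda>x'. (fst y, snd y, x')) (Kp M h y))"
  unfolding trip_dist_def Qp_def Kp_def by (simp add: bind_assoc_pmf bind_map_pmf)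

lemma state_Q: "1 \<le> h \<Longrightarrow> state_dist M \<pi> h = bind_pmf (Qp M \<pi> h) (Kp M h)"
  unfolding Qp_def Kp_def by (simp add: bind_assoc_pmf bind_map_pmf state_dist_step)

lemma r_bound:
  fixes D e t :: real
  assumes "0 \<le> D" "0 < e" "0 \<le> t"
  shows "0 \<le> t / (D + e*t)" "t / (D + e*t) \<le> 1 / e"
proof -
  show "0 \<le> t / (D + e*t)" using assms by simp
  show "t / (D + e*t) \<le> 1 / e"
  proof (cases "t = 0")
    case False
    then have "0 < t" using assms by simp
    then have "t / (D + e*t) \<le> t / (e*t)" using assms
      by (intro divide_left_mono) (auto intro!: mult_pos_pos add_nonneg_pos)
    also have "\<dots> = 1 / e" using \<open>0 < t\<close> by simp
    finally show ?thesis .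
  qed (use assms in simp)
qed

lemma r_boundP:
  assumes D: "\<And>x. 0 \<le> D x" and e: "0 < (e::real)"
  shows "0 \<le> pmf p y / (D x + e * pmf p y)" "pmf p y / (D x + e * pmf p y) \<le> 1 / e"
  using r_bound[OF D[of x] e pmf_nonneg[of p y]] by auto

lemma push_nn:
  assumes D: "\<And>x. 0 \<le> D x" and e: "0 < e"
  shows "ennreal (push_obj M h D e \<pi>) = (\<integral>\<^sup>+y. \<integral>\<^sup>+x'. ennreal (pmf (Kp M h y) x' * (pmf (Kp M h y) x' / (D x' + e * pmf (Kp M h y) x'))) \<partial>count_space UNIV \<partial>Qp M \<pi> h)"
proof -
  have "ennreal (push_obj M h D e \<pi>) = (\<integral>\<^sup>+z. ennreal ((\<lambda>(x, a, x'). pmf (Pprev M h x a) x' / (D x' + e * pmf (Pprev M h x a) x')) z) \<partial>trip_dist M \<pi> h)"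
    unfolding push_obj_def
    by (rule nn_exp[where B="1/e"]) (auto intro: r_boundP[where D=D, OF D e])
  also have "\<dots> = (\<integral>\<^sup>+y. \<integral>\<^sup>+x'. ennreal (pmf (Kp M h y) x' / (D x' + e * pmf (Kp M h y) x')) \<partial>Kp M h y \<partial>Qp M \<pi> h)"
    unfolding trip_Q by (simp add: Kp_def)
  also have "\<dots> = (\<integral>\<^sup>+y. \<integral>\<^sup>+x'. ennreal (pmf (Kp M h y) x' * (pmf (Kp M h y) x' / (D x' + e * pmf (Kp M h y) x'))) \<partial>count_space UNIV \<partial>Qp M \<pi> h)"
  proof (intro nn_integral_cong)
    fix y
    have nn: "0 \<le> pmf (Kp M h y) x' / (D x' + e * pmf (Kp M h y) x')" for x'
      by (rule r_boundP(1)[where D=D, OF D e])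
    show "(\<integral>\<^sup>+x'. ennreal (pmf (Kp M h y) x' / (D x' + e * pmf (Kp M h y) x')) \<partial>Kp M h y) =
      (\<integral>\<^sup>+x'. ennreal (pmf (Kp M h y) x' * (pmf (Kp M h y) x' / (D x' + e * pmf (Kp M h y) x'))) \<partial>count_space UNIV)"
      unfolding nn_integral_measure_pmf
    proof (intro nn_integral_cong)
      fix x show "ennreal (pmf (Kp M h y) x) * ennreal (pmf (Kp M h y) x / (D x + e * pmf (Kp M h y) x))
        = ennreal (pmf (Kp M h y) x * (pmf (Kp M h y) x / (D x + e * pmf (Kp M h y) x)))"
        by (rule ennreal_mult[OF pmf_nonneg nn, symmetric])
    qed
  qed
  finally show ?thesis .
qed

lemma push_bounds:
  assumes D: "\<And>x. 0 \<le> D x" and e: "0 < e"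
  shows "0 \<le> push_obj M h D e \<pi>" "push_obj M h D e \<pi> \<le> 1 / e"
proof -
  define f where "f = (\<lambda>(x, a, x'). pmf (Pprev M h x a) x' / (D x' + e * pmf (Pprev M h x a) x'))"
  have f0: "0 \<le> f z" and f1: "f z \<le> 1/e" for z
    unfolding f_def by (auto split: prod.splits intro: r_boundP[where D=D, OF D e])
  have int: "integrable (trip_dist M \<pi> h) f"
    by (rule measure_pmf.integrable_const_bound[where B="1/e"]) (use f0 f1 in auto)
  show "0 \<le> push_obj M h D e \<pi>" unfolding push_obj_def f_def[symmetric]
    by (rule integral_nonneg_AE) (use f0 in auto)
  show "push_obj M h D e \<pi> \<le> 1 / e" unfolding push_obj_def f_def[symmetric]
    by (rule measure_pmf.integral_le_const[OF int]) (use f1 in auto)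
qed

lemma state_r_le_push:
  fixes M :: "('x::countable, 'a) mdp"
  assumes h: "1 \<le> h" and D: "\<And>x. 0 \<le> D x" and e: "0 < e"
  shows "measure_pmf.expectation (state_dist M \<pi> h) (\<lambda>x. occ M \<pi> h x / (D x + e * occ M \<pi> h x))
     \<le> push_obj M h D e \<pi>"
proof -
  have "ennreal (measure_pmf.expectation (state_dist M \<pi> h) (\<lambda>x. occ M \<pi> h x / (D x + e * occ M \<pi> h x)))
     = (\<integral>\<^sup>+x. ennreal (occ M \<pi> h x / (D x + e * occ M \<pi> h x)) \<partial>state_dist M \<pi> h)"
    by (rule nn_exp[where B="1/e"]) (auto simp: occ_def intro: r_boundP[where D=D, OF D e])
  also have "\<dots> = (\<integral>\<^sup>+x'. ennreal (pmf (bind_pmf (Qp M \<pi> h) (Kp M h)) x' * (pmf (bind_pmf (Qp M \<pi> h) (Kp M h)) x' / (D x' + e * pmf (bind_pmf (Qp M \<pi> h) (Kp M h)) x'))) \<partial>count_space UNIV)"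
  proof -
    have nn: "0 \<le> pmf (state_dist M \<pi> h) x' / (D x' + e * pmf (state_dist M \<pi> h) x')" for x'
      by (rule r_boundP(1)[where D=D, OF D e])
    show ?thesis
      unfolding nn_integral_measure_pmf state_Q[OF h, symmetric] occ_def
    proof (intro nn_integral_cong)
      fix x show "ennreal (pmf (state_dist M \<pi> h) x) * ennreal (pmf (state_dist M \<pi> h) x / (D x + e * pmf (state_dist M \<pi> h) x))
        = ennreal (pmf (state_dist M \<pi> h) x * (pmf (state_dist M \<pi> h) x / (D x + e * pmf (state_dist M \<pi> h) x)))"
        by (rule ennreal_mult[OF pmf_nonneg nn, symmetric])
    qed
  qed
  also have "\<dots> \<le> ennreal (push_obj M h D e \<pi>)"
    unfolding push_nn[OF D e] by (rule jensen_push[where D=D, OF D e])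
  finally show ?thesis
    by (rule ennreal_le_iff[THEN iffD1, rotated]) (rule push_bounds(1)[where D=D, OF D e])
qed

lemma state_dist_cong:
  "(\<And>l. l < h \<Longrightarrow> \<pi> l = \<pi>' l) \<Longrightarrow> state_dist M \<pi> h = state_dist M \<pi>' h"
  by (induction M \<pi> h rule: state_dist.induct) auto

lemma occ_comp: "occ M (comp_pol \<pi> h \<sigma>) h = occ M \<pi> h"
  unfolding occ_def by (subst state_dist_cong[where \<pi>'=\<pi>]) (auto simp: comp_pol_def)

lemma pmf_sa: "pmf (sa_dist M \<pi> h) (x, a) = pmf (state_dist M \<pi> h) x * pmf (\<pi> h x) a"
proof -
  have eq: "pmf (map_pmf (Pair y) (\<pi> h y)) (x, a) = indicator {x} y * pmf (\<pi> h x) a" for y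
  proof (cases "y = x")
    case True
    have "pmf (map_pmf (Pair x) (\<pi> h x)) (Pair x a) = pmf (\<pi> h x) a"
      by (rule pmf_map_inj') (auto simp: inj_on_def)
    then show ?thesis using True by simp
  next
    case False then show ?thesis by (auto simp: pmf_eq_0_set_pmf)
  qed
  show ?thesis unfolding sa_dist_def pmf_bind eq
    by (simp add: measure_pmf_single)
qed

lemma marg_sa: "map_pmf fst (sa_dist M \<pi> h) = state_dist M \<pi> h"
  unfolding sa_dist_def by (simp add: map_bind_pmf map_pmf_comp bind_return_pmf')

lemma occ_sa_comp:
  fixes \<pi> :: "('x, 'a::finite) policy"
  shows "occ_sa M (comp_pol \<pi> h unif_pol) h xa = occ M \<pi> h (fst xa) / real CARD('a)"
proof -
  obtain x a where xa: "xa = (x, a)" by (cases xa)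
  show ?thesis unfolding xa occ_sa_def pmf_sa occ_comp[of M \<pi> h unif_pol, symmetric]
    by (simp add: occ_def comp_pol_def unif_pol_def)
qed

lemma occ_sa_mix_comp:
  fixes p :: "('x, 'a::finite) policy pmf"
  shows "occ_sa_mix M (map_pmf (\<lambda>\<pi>. comp_pol \<pi> h unif_pol) p) h xa = occ_mix M p h (fst xa) / real CARD('a)"
  unfolding occ_sa_mix_def occ_mix_def by (simp add: occ_sa_comp)

lemma ratio_le:
  fixes dd ob D e n :: real
  assumes "0 \<le> dd" "dd \<le> ob" "0 \<le> D" "0 < e" "1 \<le> n"
  shows "dd / (D / n + e * dd) \<le> n * (ob / (D + e * ob))"
proof (cases "dd = 0")
  case True then show ?thesis using assms by simp
next
  case False
  then have dd: "0 < dd" using assms by simp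
  have "dd / (D / n + e * dd) = n * (dd / (D + n * e * dd))"
    using assms dd by (simp add: field_simps)
  also have "\<dots> \<le> n * (dd / (D + e * dd))"
    using assms dd by (intro mult_left_mono divide_left_mono add_left_mono mult_right_mono)
       (auto intro!: mult_pos_pos add_nonneg_pos)
  also have "dd / (D + e * dd) \<le> ob / (D + e * ob)"
  proof -
    have p: "0 < D + e * dd" "0 < D + e * ob" using assms dd by (auto intro!: add_nonneg_pos)
    have "D * dd \<le> D * ob" using assms by (intro mult_left_mono) auto
    then have "dd * (D + e * ob) \<le> ob * (D + e * dd)"
      by (simp add: algebra_simps)
    then show ?thesis using p by (simp add: divide_simps)
  qed
  then have "n * (dd / (D + e * dd)) \<le> n * (ob / (D + e * ob))"
    using assms by (intro mult_left_mono) auto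
  finally show ?thesis .
qed

lemma occ_mix_nonneg: "0 \<le> occ_mix M p h x"
  unfolding occ_mix_def occ_def by (rule integral_nonneg_AE) auto

lemma occ_sa_le: "occ_sa M \<pi> h xa \<le> occ M \<pi> h (fst xa)"
proof -
  obtain x a where xa: "xa = (x, a)" by (cases xa)
  show ?thesis unfolding xa occ_sa_def pmf_sa occ_def
    by (simp add: mult_left_le pmf_le_1)
qed

lemma psi_term_le:
  fixes M :: "('x::countable, 'a::finite) mdp" and p :: "('x, 'a) policy pmf"
  assumes h: "1 \<le> h" and e: "0 < e"
  shows "measure_pmf.expectation (sa_dist M \<pi> h)
      (\<lambda>xa. occ_sa M \<pi> h xa / (occ_sa_mix M (map_pmf (\<lambda>\<pi>. comp_pol \<pi> h unif_pol) p) h xa + e * occ_sa M \<pi> h xa))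
    \<le> real CARD('a) * push_obj M h (occ_mix M p h) e \<pi>"
proof -
  define n where "n = real CARD('a)"
  define Dm where "Dm = occ_mix M p h"
  have n1: "1 \<le> n" unfolding n_def by (simp add: Suc_le_eq)
  have Dm0: "\<And>x. 0 \<le> Dm x" unfolding Dm_def by (rule occ_mix_nonneg)
  define F where "F = (\<lambda>xa. occ_sa M \<pi> h xa / (Dm (fst xa) / n + e * occ_sa M \<pi> h xa))"
  define G where "G = (\<lambda>x. n * (occ M \<pi> h x / (Dm x + e * occ M \<pi> h x)))"
  have osa0: "0 \<le> occ_sa M \<pi> h xa" for xa unfolding occ_sa_def by simp
  have o0: "0 \<le> occ M \<pi> h x" for x unfolding occ_def by simp
  have FG: "F xa \<le> G (fst xa)" for xa
    unfolding F_def G_def by (rule ratio_le[OF osa0 occ_sa_le Dm0 e n1])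
  have G0: "0 \<le> G x" "G x \<le> n * (1/e)" for x
  proof -
    have r: "0 \<le> occ M \<pi> h x / (Dm x + e * occ M \<pi> h x)" "occ M \<pi> h x / (Dm x + e * occ M \<pi> h x) \<le> 1/e"
      using r_bound[OF Dm0[of x] e o0[of x]] by auto
    show "0 \<le> G x" unfolding G_def using r(1) n1 by (intro mult_nonneg_nonneg) auto
    show "G x \<le> n * (1/e)" unfolding G_def using r(2) n1 by (intro mult_left_mono) auto
  qed
  have F0: "0 \<le> F xa" for xa
    unfolding F_def using osa0[of xa] Dm0[of "fst xa"] n1 e by (auto intro!: divide_nonneg_nonneg add_nonneg_nonneg)
  have intF: "integrable (sa_dist M \<pi> h) F"
    by (rule measure_pmf.integrable_const_bound[where B="n * (1/e)"])
       (use F0 FG G0 in \<open>auto intro!: AE_I2 simp: abs_of_nonneg intro: order_trans[OF FG]\<close>)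
  have intG: "integrable (sa_dist M \<pi> h) (\<lambda>xa. G (fst xa))"
    by (rule measure_pmf.integrable_const_bound[where B="n * (1/e)"]) (use G0 in auto)
  have "measure_pmf.expectation (sa_dist M \<pi> h)
      (\<lambda>xa. occ_sa M \<pi> h xa / (occ_sa_mix M (map_pmf (\<lambda>\<pi>. comp_pol \<pi> h unif_pol) p) h xa + e * occ_sa M \<pi> h xa))
      = measure_pmf.expectation (sa_dist M \<pi> h) F"
    unfolding F_def occ_sa_mix_comp Dm_def n_def ..
  also have "\<dots> \<le> measure_pmf.expectation (sa_dist M \<pi> h) (\<lambda>xa. G (fst xa))"
    by (rule integral_mono[OF intF intG FG])
  also have "\<dots> = measure_pmf.expectation (map_pmf fst (sa_dist M \<pi> h)) G"
    by simp
  also have "\<dots> = n * measure_pmf.expectation (state_dist M \<pi> h) (\<lambda>x. occ M \<pi> h x / (Dm x + e * occ M \<pi> h x))"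
    unfolding marg_sa G_def by (rule integral_mult_right_zero)
  also have "\<dots> \<le> n * push_obj M h Dm e \<pi>"
    using state_r_le_push[where D=Dm, OF h Dm0 e] n1 by (intro mult_left_mono) auto
  finally show ?thesis unfolding n_def Dm_def .
qed

lemma occ_le:
  assumes h: "1 \<le> h" and A: "\<And>x a x'. pmf (Pprev M h x a) x' \<le> A x'"
  shows "occ M \<pi> h x' \<le> A x'"
proof -
  have "occ M \<pi> h x' = (\<integral>y. pmf (Kp M h y) x' \<partial>Qp M \<pi> h)"
    unfolding occ_def state_Q[OF h] by (rule pmf_bind)
  also have "\<dots> \<le> A x'"
  proof (rule measure_pmf.integral_le_const)
    show "integrable (Qp M \<pi> h) (\<lambda>y. pmf (Kp M h y) x')"
      by (rule measure_pmf.integrable_const_bound[where B=1]) (auto simp: pmf_le_1)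
    show "AE y in Qp M \<pi> h. pmf (Kp M h y) x' \<le> A x'"
      by (auto simp: Kp_def A)
  qed
  finally show ?thesis .
qed

lemma frac_mono:
  fixes P A D :: real
  assumes "0 \<le> P" "P \<le> A" "0 \<le> D"
  shows "P / (D + P) \<le> A / (D + A)"
proof (cases "P = 0")
  case True then show ?thesis using assms by simp
next
  case False
  then have p: "0 < D + P" "0 < D + A" using assms by auto
  have "D * P \<le> D * A" using assms by (intro mult_left_mono) auto
  then have "P * (D + A) \<le> A * (D + P)" by (simp add: algebra_simps)
  then show ?thesis using p by (simp add: divide_simps)
qed

lemma push_le_occ:
  fixes M :: "('x::countable, 'a) mdp"
  assumes h: "1 \<le> h" and D: "\<And>x. 0 \<le> D x"
    and A: "\<And>x a x'. pmf (Pprev M h x a) x' \<le> A x'"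
  shows "ennreal (push_obj M h D 1 \<pi>) \<le> (\<integral>\<^sup>+x'. ennreal (occ M \<pi> h x' * (A x' / (D x' + A x'))) \<partial>count_space UNIV)"
proof -
  have A0: "0 \<le> A x" for x using A[of undefined undefined x] pmf_nonneg[of "Pprev M h undefined undefined" x] by linarith
  define g where "g = (\<lambda>x'. A x' / (D x' + A x'))"
  have g0: "0 \<le> g x" for x unfolding g_def using A0[of x] D[of x] by simp
  have "ennreal (push_obj M h D 1 \<pi>) = (\<integral>\<^sup>+z. ennreal ((\<lambda>(x, a, x'). pmf (Pprev M h x a) x' / (D x' + 1 * pmf (Pprev M h x a) x')) z) \<partial>trip_dist M \<pi> h)"
    unfolding push_obj_def
  proof (rule nn_exp[where B="1/1"])
    have b: "0 \<le> pmf p y / (D x + pmf p y)" "pmf p y / (D x + pmf p y) \<le> 1/1" for p y x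
      using r_boundP[where D=D and e=1, OF D] by simp_all
    show "0 \<le> (\<lambda>(x, a, x'). pmf (Pprev M h x a) x' / (D x' + 1 * pmf (Pprev M h x a) x')) z" for z
      by (cases z) (auto intro: b)
    show "(\<lambda>(x, a, x'). pmf (Pprev M h x a) x' / (D x' + 1 * pmf (Pprev M h x a) x')) z \<le> 1/1" for z
      by (cases z) (simp only: mult_1 prod.case b)
  qed
  also have "\<dots> \<le> (\<integral>\<^sup>+z. ennreal (g ((\<lambda>(x, a, x'). x') z)) \<partial>trip_dist M \<pi> h)"
    by (intro nn_integral_mono ennreal_leI) (auto simp: g_def split: prod.splits intro!: frac_mono A D)
  also have "\<dots> = (\<integral>\<^sup>+x'. ennreal (g x') \<partial>map_pmf (\<lambda>(x, a, x'). x') (trip_dist M \<pi> h))"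
    by simp
  also have "\<dots> = (\<integral>\<^sup>+x'. ennreal (occ M \<pi> h x' * g x') \<partial>count_space UNIV)"
    unfolding trip_marg[OF h] nn_integral_measure_pmf occ_def
    by (intro nn_integral_cong) (simp add: ennreal_mult[OF pmf_nonneg g0])
  finally show ?thesis unfolding g_def .
qed

lemma int_cpmf:
  assumes "0 \<le> c"
  shows "(\<integral>\<^sup>+x. ennreal (c * pmf p x) \<partial>count_space UNIV) = ennreal c"
proof -
  have "(\<integral>\<^sup>+x. ennreal (c * pmf p x) \<partial>count_space UNIV) = (\<integral>\<^sup>+x. ennreal c * ennreal (pmf p x) \<partial>count_space UNIV)"
    by (intro nn_integral_cong) (simp add: ennreal_mult[OF assms pmf_nonneg])
  also have "\<dots> = ennreal c * (\<integral>\<^sup>+x. ennreal (pmf p x) \<partial>count_space UNIV)"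
    by (rule nn_integral_cmult) simp
  also have "(\<integral>\<^sup>+x. ennreal (pmf p x) \<partial>count_space UNIV) = 1"
    by (simp add: nn_integral_pmf measure_pmf.emeasure_space_1[simplified])
  finally show ?thesis by simp
qed

lemma sum_push_bound:
  fixes M :: "('x::countable, 'a) mdp" and pol :: "nat \<Rightarrow> ('x, 'a) policy" and \<mu> :: "'x pmf"
    and C' :: real and T :: nat
  assumes h: "1 \<le> h" and P: "\<And>x a x'. pmf (Pprev M h x a) x' \<le> C' * pmf \<mu> x'"
  shows "(\<Sum>t\<in>{1..T}. ennreal (push_obj M h (\<lambda>x. \<Sum>i\<in>{1..<t}. occ M (pol i) h x) 1 (pol t)))
     \<le> ennreal (2 * C' * ln (1 + real T)) + ennreal (2 * real T / (1 + real T))"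
proof -
  define a where "a = (\<lambda>x. C' * pmf \<mu> x)"
  define L1 where "L1 = ln (1 + real T)"
  have L10: "0 \<le> L1" unfolding L1_def by simp
  have C0: "0 \<le> C'"
  proof -
    obtain z where z: "z \<in> set_pmf (Pprev M h undefined undefined)"
      using set_pmf_not_empty[of "Pprev M h undefined undefined"] by blast
    then have "0 < pmf (Pprev M h undefined undefined) z" by (simp add: pmf_positive)
    then have "0 < C' * pmf \<mu> z" using P[of undefined undefined z] by linarith
    then show ?thesis using pmf_nonneg[of \<mu> z] by (simp add: zero_less_mult_iff)
  qed
  have Pa: "pmf (Pprev M h x b) x' \<le> a x'" for x b x' unfolding a_def by (rule P)
  have a0: "0 \<le> a x" for x unfolding a_def using C0 by simp
  have occ0: "0 \<le> occ M \<pi> h x" for \<pi> x unfolding occ_def by simp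
  have occa: "occ M \<pi> h x \<le> a x" for \<pi> x by (rule occ_le[OF h Pa])
  define D where "D = (\<lambda>t x. \<Sum>i\<in>{1..<t}. occ M (pol i) h x)"
  have D0: "0 \<le> D t x" for t x unfolding D_def using occ0 by (simp add: sum_nonneg)
  define f where "f = (\<lambda>t x. occ M (pol t) h x * (a x / (D t x + a x)))"
  have f0: "0 \<le> f t x" for t x unfolding f_def using occ0 a0 D0 by simp
  have "(\<Sum>t\<in>{1..T}. ennreal (push_obj M h (D t) 1 (pol t)))
      \<le> (\<Sum>t\<in>{1..T}. \<integral>\<^sup>+x. ennreal (f t x) \<partial>count_space UNIV)"
    unfolding f_def by (intro sum_mono push_le_occ[OF h D0 Pa])
  also have "\<dots> = (\<integral>\<^sup>+x. (\<Sum>t\<in>{1..T}. ennreal (f t x)) \<partial>count_space UNIV)"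
    by (rule nn_integral_sum[symmetric]) simp
  also have "\<dots> = (\<integral>\<^sup>+x. ennreal (\<Sum>t\<in>{1..T}. f t x) \<partial>count_space UNIV)"
    using f0 by (intro nn_integral_cong) simp
  also have "\<dots> \<le> (\<integral>\<^sup>+x. ennreal ((2 * C' * L1) * pmf \<mu> x) + ennreal (\<Sum>i\<in>{1..T}. (2 / (1 + real T)) * pmf (state_dist M (pol i) h) x) \<partial>count_space UNIV)"
  proof (intro nn_integral_mono)
    fix x
    have "(\<Sum>t\<in>{1..T}. f t x) \<le> 2 * a x * ln (1 + real T) + 2 * (\<Sum>i\<in>{1..T}. occ M (pol i) h x) / (1 + real T)"
      unfolding f_def D_def by (rule potential[OF a0 occ0 occa])
    also have "\<dots> = (2 * C' * L1) * pmf \<mu> x + (\<Sum>i\<in>{1..T}. (2 / (1 + real T)) * pmf (state_dist M (pol i) h) x)"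
      unfolding a_def L1_def occ_def by (simp add: sum_distrib_left sum_divide_distrib)
    finally have "ennreal (\<Sum>t\<in>{1..T}. f t x) \<le> ennreal ((2 * C' * L1) * pmf \<mu> x + (\<Sum>i\<in>{1..T}. (2 / (1 + real T)) * pmf (state_dist M (pol i) h) x))"
      by (rule ennreal_leI)
    also have "\<dots> = ennreal ((2 * C' * L1) * pmf \<mu> x) + ennreal (\<Sum>i\<in>{1..T}. (2 / (1 + real T)) * pmf (state_dist M (pol i) h) x)"
      using C0 L10 by (intro ennreal_plus) (auto intro!: sum_nonneg)
    finally show "ennreal (\<Sum>t\<in>{1..T}. f t x) \<le> ennreal ((2 * C' * L1) * pmf \<mu> x) + ennreal (\<Sum>i\<in>{1..T}. (2 / (1 + real T)) * pmf (state_dist M (pol i) h) x)" .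
  qed
  also have "\<dots> = ennreal (2 * C' * L1) + (\<integral>\<^sup>+x. ennreal (\<Sum>i\<in>{1..T}. (2 / (1 + real T)) * pmf (state_dist M (pol i) h) x) \<partial>count_space UNIV)"
    by (subst nn_integral_add) (auto simp: int_cpmf C0 L10)
  also have "(\<integral>\<^sup>+x. ennreal (\<Sum>i\<in>{1..T}. (2 / (1 + real T)) * pmf (state_dist M (pol i) h) x) \<partial>count_space UNIV)
      = (\<integral>\<^sup>+x. (\<Sum>i\<in>{1..T}. ennreal ((2 / (1 + real T)) * pmf (state_dist M (pol i) h) x)) \<partial>count_space UNIV)"
    by (intro nn_integral_cong) simp
  also have "\<dots> = (\<Sum>i\<in>{1..T}. \<integral>\<^sup>+x. ennreal ((2 / (1 + real T)) * pmf (state_dist M (pol i) h) x) \<partial>count_space UNIV)"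
    by (rule nn_integral_sum) simp
  also have "\<dots> = (\<Sum>i\<in>{1..T}. ennreal (2 / (1 + real T)))"
    by (intro sum.cong refl int_cpmf) simp
  also have "\<dots> = ennreal (2 * real T / (1 + real T))"
  proof -
    have "(\<Sum>i\<in>{1..T}. ennreal (2 / (1 + real T))) = ennreal (\<Sum>i\<in>{1..T}. 2 / (1 + real T))"
      by (rule sum_ennreal) simp
    then show ?thesis by simp
  qed
  finally show ?thesis unfolding D_def L1_def .
qed

lemma push_integrable:
  assumes D: "\<And>x. 0 \<le> D x" and e: "0 < e"
  shows "integrable (trip_dist M \<pi> h) (\<lambda>(x, a, x'). pmf (Pprev M h x a) x' / (D x' + e * pmf (Pprev M h x a) x'))"
proof -
  define f where "f = (\<lambda>(x, a, x'). pmf (Pprev M h x a) x' / (D x' + e * pmf (Pprev M h x a) x'))"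
  have f0: "0 \<le> f z" and f1: "f z \<le> 1/e" for z
    unfolding f_def by (auto split: prod.splits intro: r_boundP[where D=D, OF D e])
  have int: "integrable (trip_dist M \<pi> h) f"
    by (rule measure_pmf.integrable_const_bound[where B="1/e"]) (use f0 f1 in auto)
  then show ?thesis unfolding f_def .
qed

lemma mono_push:
  assumes D: "\<And>x. 0 \<le> D x" and DD: "\<And>x. D x \<le> D' x"
  shows "push_obj M h D' 1 \<pi> \<le> push_obj M h D 1 \<pi>"
proof -
  have D': "\<And>x. 0 \<le> D' x" using D DD order_trans by blast
  have b: "0 \<le> pmf p y / (E x + pmf p y)" "pmf p y / (E x + pmf p y) \<le> 1"
    if "\<And>x. 0 \<le> E x" for p y x and E :: "'x \<Rightarrow> real"
    using r_boundP[where D=E and e=1, OF that] by simp_all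
  show ?thesis unfolding push_obj_def
  proof (rule integral_mono)
    show "integrable (trip_dist M \<pi> h) (\<lambda>(x, a, x'). pmf (Pprev M h x a) x' / (D' x' + 1 * pmf (Pprev M h x a) x'))"
      by (rule push_integrable[where D=D' and e=1, OF D']) simp
    show "integrable (trip_dist M \<pi> h) (\<lambda>(x, a, x'). pmf (Pprev M h x a) x' / (D x' + 1 * pmf (Pprev M h x a) x'))"
      by (rule push_integrable[where D=D and e=1, OF D]) simp
    fix z
    show "(\<lambda>(x, a, x'). pmf (Pprev M h x a) x' / (D' x' + 1 * pmf (Pprev M h x a) x')) z
        \<le> (\<lambda>(x, a, x'). pmf (Pprev M h x a) x' / (D x' + 1 * pmf (Pprev M h x a) x')) z"
    proof (cases z)
      case (fields x a x')
      define P where "P = pmf (Pprev M h x a) x'"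
      have "P / (D' x' + P) \<le> P / (D x' + P)"
      proof (cases "P = 0")
        case False
        then have "0 < P" unfolding P_def using pmf_nonneg[of "Pprev M h x a" x'] by linarith
        then show ?thesis using D[of x'] D'[of x'] DD[of x']
          by (intro divide_left_mono) (auto intro!: mult_pos_pos add_nonneg_pos)
      qed simp
      then show ?thesis unfolding fields P_def by simp
    qed
  qed
qed

lemma ennreal_add_le: "0 \<le> a \<Longrightarrow> ennreal (a + b) \<le> ennreal a + ennreal b"
proof (cases "0 \<le> b")
  case True then show "0 \<le> a \<Longrightarrow> ?thesis" by simp
next
  case False
  assume "0 \<le> a"
  then have "ennreal (a + b) \<le> ennreal a" using False by (intro ennreal_leI) simp
  then show ?thesis by (simp add: add_increasing2)
qed

theorem theorem4p5:
  fixes M :: "('x::countable, 'a::finite) mdp"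
    and PI :: "('x, 'a) policy set"
    and \<epsilon> \<epsilon>_opt :: real and h T :: nat
    and pol :: "nat \<Rightarrow> ('x, 'a) policy"
  assumes eps: "0 < \<epsilon>" "\<epsilon> \<le> 1"
    and T_def: "real T = 1 / \<epsilon>"
    and h: "1 \<le> h" "h \<le> horizon M"
    and pol_in: "\<And>t. t \<in> {1..T} \<Longrightarrow> pol t \<in> PI"
    and approx_opt: "\<And>t. t \<in> {1..T} \<Longrightarrow>
       push_obj M h (\<lambda>x. \<Sum>i\<in>{1..<t}. occ M (pol i) h x) 1 (pol t)
         \<ge> (SUP \<pi>\<in>PI. push_obj M h (\<lambda>x. \<Sum>i\<in>{1..<t}. occ M (pol i) h x) 1 \<pi>) - \<epsilon>_opt"
    and eps_opt: "ennreal \<epsilon>_opt \<le> C_push M h * ennreal (\<epsilon> * ln (2 / \<epsilon>))"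
  shows "(let p = pmf_of_multiset (image_mset pol (mset_set {1..T}));
              p' = map_pmf (\<lambda>\<pi>. comp_pol \<pi> h unif_pol) p
          in set_pmf p \<subseteq> PI
           \<and> real (card (set_pmf p)) \<le> 1 / \<epsilon>
           \<and> ennreal (Psi_push M PI h \<epsilon> p) \<le> 5 * C_push M h * ennreal (ln (2 / \<epsilon>))
           \<and> ennreal (Psi M PI h \<epsilon> p')
               \<le> 5 * of_nat CARD('a) * C_push M h * ennreal (ln (2 / \<epsilon>)))"
proof -
  have T1: "1 \<le> real T" using T_def eps by simp
  then have T1n: "1 \<le> T" by simp
  have epsT: "\<epsilon> = 1 / real T" unfolding T_def by simp
  define p where "p = pmf_of_multiset (image_mset pol (mset_set {1..T}))"
  define p' where "p' = map_pmf (\<lambda>\<pi>. comp_pol \<pi> h unif_pol) p"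
  have ne: "{1..T} \<noteq> {}" using T1n by simp
  have p_eq: "p = map_pmf pol (pmf_of_set {1..T})"
    unfolding p_def by (rule map_pmf_of_set[symmetric]) (use ne in auto)
  have set_p: "set_pmf p = pol ` {1..T}" unfolding p_eq using ne by simp
  have part1: "set_pmf p \<subseteq> PI" unfolding set_p using pol_in by auto
  have part2: "real (card (set_pmf p)) \<le> 1 / \<epsilon>"
  proof -
    have "card (set_pmf p) \<le> card {1..T}" unfolding set_p by (rule card_image_le) simp
    then show ?thesis unfolding T_def[symmetric] by simp
  qed
  define Dt where "Dt = (\<lambda>t x. \<Sum>i\<in>{1..<t}. occ M (pol i) h x)"
  have occ0: "0 \<le> occ M \<pi> h x" for \<pi> x unfolding occ_def by simp
  have Dt0: "0 \<le> Dt t x" for t x unfolding Dt_def using occ0 by (simp add: sum_nonneg)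
  have occmix: "occ_mix M p h x = Dt (Suc T) x / real T" for x
  proof -
    have "{1..<Suc T} = {1..T}" by auto
    then show ?thesis unfolding occ_mix_def p_eq Dt_def using ne
      by (simp add: integral_pmf_of_set)
  qed
  have Dm0: "\<And>x. 0 \<le> occ_mix M p h x" by (rule occ_mix_nonneg)
  have PIne: "PI \<noteq> {}" using pol_in[of 1] T1n by auto
  have bddP: "bdd_above ((\<lambda>\<pi>. push_obj M h D e \<pi>) ` PI)" if "\<And>x. 0 \<le> D x" "0 < e" for D e
    using push_bounds(2)[where D=D, OF that] by (auto intro!: bdd_aboveI)
  have real_bound: "Psi_push M PI h \<epsilon> p \<le> (\<Sum>t\<in>{1..T}. push_obj M h (Dt t) 1 (pol t)) + real T * \<epsilon>_opt"
    unfolding Psi_push_def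
  proof (rule cSUP_least[OF PIne])
    fix \<pi> assume \<pi>: "\<pi> \<in> PI"
    have "push_obj M h (occ_mix M p h) \<epsilon> \<pi> = real T * push_obj M h (Dt (Suc T)) 1 \<pi>"
    proof -
      have "pmf (Pprev M h x a) x' / (occ_mix M p h x' + \<epsilon> * pmf (Pprev M h x a) x')
          = real T * (pmf (Pprev M h x a) x' / (Dt (Suc T) x' + 1 * pmf (Pprev M h x a) x'))" for x a x'
      proof -
        define P where "P = pmf (Pprev M h x a) x'"
        define S where "S = Dt (Suc T) x'"
        have "P / (S / real T + 1 / real T * P) = real T * (P / (S + 1 * P))"
        proof (cases "S + P = 0")
          case True
          then have "S / real T + 1 / real T * P = 0" by (simp add: add_divide_distrib[symmetric])
          then show ?thesis using True by simp
        next
          case False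
          have "S / real T + 1 / real T * P = (S + P) / real T" by (simp add: add_divide_distrib)
          then show ?thesis using False T1 by simp
        qed
        then show ?thesis unfolding P_def S_def occmix epsT .
      qed
      then have fe: "(\<lambda>(x, a, x'). pmf (Pprev M h x a) x' / (occ_mix M p h x' + \<epsilon> * pmf (Pprev M h x a) x'))
          = (\<lambda>z. real T * (\<lambda>(x, a, x'). pmf (Pprev M h x a) x' / (Dt (Suc T) x' + 1 * pmf (Pprev M h x a) x')) z)"
        by (auto simp only: fun_eq_iff split: prod.splits)
      show ?thesis unfolding push_obj_def fe by (rule integral_mult_right_zero)
    qed
    also have "\<dots> = (\<Sum>t\<in>{1..T}. push_obj M h (Dt (Suc T)) 1 \<pi>)" by simp
    also have "\<dots> \<le> (\<Sum>t\<in>{1..T}. push_obj M h (Dt t) 1 (pol t) + \<epsilon>_opt)"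
    proof (rule sum_mono)
      fix t assume t: "t \<in> {1..T}"
      have "push_obj M h (Dt (Suc T)) 1 \<pi> \<le> push_obj M h (Dt t) 1 \<pi>"
      proof (rule mono_push)
        show "0 \<le> Dt t x" for x by (rule Dt0)
        show "Dt t x \<le> Dt (Suc T) x" for x
          unfolding Dt_def using t occ0 by (intro sum_mono2) auto
      qed
      also have "\<dots> \<le> (SUP \<pi>\<in>PI. push_obj M h (Dt t) 1 \<pi>)"
        by (rule cSUP_upper[OF \<pi> bddP]) (auto intro: Dt0)
      also have "\<dots> \<le> push_obj M h (Dt t) 1 (pol t) + \<epsilon>_opt"
        using approx_opt[OF t] unfolding Dt_def by simp
      finally show "push_obj M h (Dt (Suc T)) 1 \<pi> \<le> push_obj M h (Dt t) 1 (pol t) + \<epsilon>_opt" .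
    qed
    also have "\<dots> = (\<Sum>t\<in>{1..T}. push_obj M h (Dt t) 1 (pol t)) + real T * \<epsilon>_opt"
      by (simp add: sum.distrib)
    finally show "push_obj M h (occ_mix M p h) \<epsilon> \<pi> \<le> (\<Sum>t\<in>{1..T}. push_obj M h (Dt t) 1 (pol t)) + real T * \<epsilon>_opt" .
  qed
  define L where "L = ln (2 / \<epsilon>)"
  have L_eq: "L = ln (2 * real T)" unfolding L_def epsT by simp
  have L_pos: "0 < L" unfolding L_eq using T1 by simp
  have L1: "ln (1 + real T) \<le> L" unfolding L_eq using T1 by simp
  have LT: "real T / (1 + real T) \<le> L"
  proof -
    have "ln (1 / (1 + real T)) \<le> 1 / (1 + real T) - 1"
      using T1 by (intro ln_le_minus_one) auto
    also have "\<dots> = - (real T / (1 + real T))" using T1 by (simp add: field_simps)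
    finally have "real T / (1 + real T) \<le> ln (1 + real T)" using T1 by (simp add: ln_div)
    then show ?thesis using L1 by linarith
  qed
  define X where "X = ennreal (Psi_push M PI h \<epsilon> p)"
  define c where "c = ennreal (5 * L)"
  have c0: "c \<noteq> 0" "c \<noteq> top" unfolding c_def using L_pos by auto
  define Sfun where "Sfun = (\<lambda>\<mu>::'x pmf. SUP xax\<in>(UNIV :: ('x \<times> 'a \<times> 'x) set).
       (case xax of (x, a, x') \<Rightarrow> ennreal (pmf (Pprev M h x a) x') / ennreal (pmf \<mu> x')))"
  have C_eq: "C_push M h = (INF \<mu>. Sfun \<mu>)" unfolding C_push_def Sfun_def ..
  have sum0: "0 \<le> (\<Sum>t\<in>{1..T}. push_obj M h (Dt t) 1 (pol t))"
    by (intro sum_nonneg push_bounds(1)[where D="Dt t" for t]) (auto intro: Dt0)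
  have key: "X \<le> Sfun \<mu> * c" for \<mu>
  proof (cases "Sfun \<mu> = top")
    case True then show ?thesis using c0 by (simp add: ennreal_top_mult)
  next
    case False
    define C' where "C' = enn2real (Sfun \<mu>)"
    have SC: "Sfun \<mu> = ennreal C'" unfolding C'_def using False by (simp add: less_top)
    have C'0: "0 \<le> C'" unfolding C'_def by simp
    have Pb: "pmf (Pprev M h x a) x' \<le> C' * pmf \<mu> x'" for x a x'
    proof -
      have le: "ennreal (pmf (Pprev M h x a) x') / ennreal (pmf \<mu> x') \<le> Sfun \<mu>"
        unfolding Sfun_def by (rule SUP_upper2[where i="(x, a, x')"]) simp_all
      show ?thesis
      proof (cases "pmf \<mu> x' = 0")
        case True
        show ?thesis
        proof (cases "pmf (Pprev M h x a) x' = 0")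
          case False
          then have "0 < pmf (Pprev M h x a) x'" using pmf_nonneg[of "Pprev M h x a" x'] by linarith
          then have "Sfun \<mu> = top" using le True by (simp add: top_unique)
          then show ?thesis using \<open>Sfun \<mu> \<noteq> top\<close> by simp
        qed (simp add: True)
      next
        case False
        then have m: "0 < pmf \<mu> x'" using pmf_nonneg[of \<mu> x'] by linarith
        have "ennreal (pmf (Pprev M h x a) x' / pmf \<mu> x') \<le> ennreal C'"
          using le m unfolding SC by (simp add: divide_ennreal)
        then have "pmf (Pprev M h x a) x' / pmf \<mu> x' \<le> C'" using C'0 by (simp add: ennreal_le_iff)
        then show ?thesis using m by (simp add: pos_divide_le_eq)
      qed
    qed
    have C1: "1 \<le> C'"
    proof -
      have "ennreal 1 = (\<integral>\<^sup>+x. ennreal (1 * pmf (Pprev M h undefined undefined) x) \<partial>count_space UNIV)"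
        by (rule int_cpmf[symmetric]) simp
      also have "\<dots> \<le> (\<integral>\<^sup>+x. ennreal (C' * pmf \<mu> x) \<partial>count_space UNIV)"
        by (intro nn_integral_mono ennreal_leI) (simp add: Pb)
      also have "\<dots> = ennreal C'" by (rule int_cpmf[OF C'0])
      finally show ?thesis using C'0 by (simp add: ennreal_le_iff)
    qed
    have sb: "(\<Sum>t\<in>{1..T}. ennreal (push_obj M h (Dt t) 1 (pol t)))
        \<le> ennreal (2 * C' * ln (1 + real T)) + ennreal (2 * real T / (1 + real T))"
      unfolding Dt_def by (rule sum_push_bound[OF h(1) Pb])
    have eo: "ennreal (real T * \<epsilon>_opt) \<le> ennreal (C' * L)"
    proof (cases "\<epsilon>_opt \<le> 0")
      case True
      then have "real T * \<epsilon>_opt \<le> 0" by (simp add: mult_nonneg_nonpos)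
      then show ?thesis by (simp add: ennreal_neg)
    next
      case False
      have "ennreal (real T * \<epsilon>_opt) = ennreal (real T) * ennreal \<epsilon>_opt"
        by (rule ennreal_mult) (use False in auto)
      also have "\<dots> \<le> ennreal (real T) * (C_push M h * ennreal (\<epsilon> * L))"
        unfolding L_def by (intro mult_left_mono eps_opt) simp
      also have "\<dots> \<le> ennreal (real T) * (Sfun \<mu> * ennreal (\<epsilon> * L))"
        unfolding C_eq by (intro mult_left_mono mult_right_mono INF_lower) simp_all
      also have "\<dots> = ennreal (real T * (C' * (\<epsilon> * L)))"
        unfolding SC using C'0 eps L_pos by (simp add: ennreal_mult)
      also have "real T * (C' * (\<epsilon> * L)) = C' * L" unfolding epsT using T1 by simp
      finally show ?thesis .
    qed
    have "X \<le> ennreal ((\<Sum>t\<in>{1..T}. push_obj M h (Dt t) 1 (pol t)) + real T * \<epsilon>_opt)"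
      unfolding X_def by (rule ennreal_leI[OF real_bound])
    also have "\<dots> \<le> ennreal (\<Sum>t\<in>{1..T}. push_obj M h (Dt t) 1 (pol t)) + ennreal (real T * \<epsilon>_opt)"
      by (rule ennreal_add_le[OF sum0])
    also have "ennreal (\<Sum>t\<in>{1..T}. push_obj M h (Dt t) 1 (pol t)) = (\<Sum>t\<in>{1..T}. ennreal (push_obj M h (Dt t) 1 (pol t)))"
      by (rule sum_ennreal[symmetric]) (auto intro: push_bounds(1)[where D="Dt t" for t] Dt0)
    also have "\<dots> + ennreal (real T * \<epsilon>_opt) \<le> ennreal (2 * C' * ln (1 + real T)) + ennreal (2 * real T / (1 + real T)) + ennreal (C' * L)"
      by (rule add_mono[OF sb eo])
    also have "\<dots> = ennreal (2 * C' * ln (1 + real T) + 2 * real T / (1 + real T) + C' * L)"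
      using C'0 L_pos T1 by (simp add: ennreal_plus)
    also have "\<dots> \<le> ennreal (C' * (5 * L))"
    proof (rule ennreal_leI)
      have "2 * C' * ln (1 + real T) \<le> 2 * C' * L" using L1 C'0 by (intro mult_left_mono) auto
      moreover have "2 * real T / (1 + real T) \<le> 2 * C' * L"
      proof -
        have "2 * real T / (1 + real T) \<le> 2 * L" using LT by simp
        also have "\<dots> \<le> 2 * C' * L" using C1 L_pos by simp
        finally show ?thesis .
      qed
      ultimately show "2 * C' * ln (1 + real T) + 2 * real T / (1 + real T) + C' * L \<le> C' * (5 * L)"
        by (simp add: algebra_simps)
    qed
    also have "\<dots> = Sfun \<mu> * c" unfolding SC c_def using C'0 L_pos by (simp add: ennreal_mult)
    finally show ?thesis .
  qed
  have "X / c \<le> C_push M h"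
    unfolding C_eq
  proof (rule INF_greatest)
    fix \<mu> :: "'x pmf"
    have "X / c \<le> (Sfun \<mu> * c) / c" by (rule divide_right_mono_ennreal[OF key])
    also have "\<dots> = Sfun \<mu>" using c0 by (rule mult_divide_eq_ennreal)
    finally show "X / c \<le> Sfun \<mu>" .
  qed
  then have "X / c * c \<le> C_push M h * c" by (rule mult_right_mono) simp
  moreover have "X / c * c = X" using c0 by (simp add: ennreal_divide_times less_top)
  moreover have "c = 5 * ennreal L" unfolding c_def using L_pos by (simp add: ennreal_mult)
  ultimately have part3: "ennreal (Psi_push M PI h \<epsilon> p) \<le> 5 * C_push M h * ennreal L"
    unfolding X_def by (simp add: ac_simps)
  have P4: "Psi M PI h \<epsilon> p' \<le> real CARD('a) * Psi_push M PI h \<epsilon> p"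
    unfolding Psi_def
  proof (rule cSUP_least[OF PIne])
    fix \<pi> assume \<pi>: "\<pi> \<in> PI"
    have "measure_pmf.expectation (sa_dist M \<pi> h)
      (\<lambda>xa. occ_sa M \<pi> h xa / (occ_sa_mix M p' h xa + \<epsilon> * occ_sa M \<pi> h xa))
      \<le> real CARD('a) * push_obj M h (occ_mix M p h) \<epsilon> \<pi>"
      unfolding p'_def by (rule psi_term_le[OF h(1) eps(1)])
    also have "\<dots> \<le> real CARD('a) * Psi_push M PI h \<epsilon> p"
      unfolding Psi_push_def
      by (intro mult_left_mono cSUP_upper[OF \<pi> bddP[OF Dm0 eps(1)]]) simp
    finally show "measure_pmf.expectation (sa_dist M \<pi> h)
      (\<lambda>xa. occ_sa M \<pi> h xa / (occ_sa_mix M p' h xa + \<epsilon> * occ_sa M \<pi> h xa))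
      \<le> real CARD('a) * Psi_push M PI h \<epsilon> p" .
  qed
  have part4: "ennreal (Psi M PI h \<epsilon> p') \<le> 5 * of_nat CARD('a) * C_push M h * ennreal L"
  proof -
    have "ennreal (Psi M PI h \<epsilon> p') \<le> ennreal (real CARD('a) * Psi_push M PI h \<epsilon> p)"
      by (rule ennreal_leI[OF P4])
    also have "\<dots> = of_nat CARD('a) * ennreal (Psi_push M PI h \<epsilon> p)"
      by (simp add: ennreal_mult' ennreal_of_nat_eq_real_of_nat)
    also have "\<dots> \<le> of_nat CARD('a) * (5 * C_push M h * ennreal L)"
      by (rule mult_left_mono[OF part3]) simp
    finally show ?thesis by (simp add: ac_simps)
  qed
  show ?thesis
    unfolding Let_def p_def[symmetric] p'_def[symmetric] L_def[symmetric]
    using part1 part2 part3 part4 by blast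
qed

end
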